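(* Let $\Sigma$ be a finite alphabet, $S=s_0\cdots s_{m-1}\in\Sigma^m$, and $a,a'\in\Sigma^m$ with $\mathrm{rep}_{\mathrm{Sub}(S)}(a)=\mathrm{rep}_{\mathrm{Sub}(S)}(a')$. Then $f^S_{\mathrm{B(N)DM}}(a)=f^S_{\mathrm{B(N)DM}}(a')$ and $g^S_{\mathrm{B(N)DM}}(a)=g^S_{\mathrm{B(N)DM}}(a')$.
   Context: $\mathrm{Sub}(S)$ is the set of all substrings of $S$, including $\varepsilon$; $\mathrm{rep}_{\mathrm{Sub}(S)}(a)$ is the longest suffix of $a$ that is a substring of $S$. Let $S^{\mathrm{rev}}=s_{m-1}\cdots s_0$. The suffix automaton of $S^{\mathrm{rev}}$ is the deterministic automaton accepting exactly the suffixes of $S^{\mathrm{rev}}$, extended with a non-accepting sink FAIL entered as soon as the string read so far is not a substring of $S^{\mathrm{rev}}$. A window $w=w_0\cdots w_{m-1}$ is read from right to left, i.e. the automaton reads $w^{\mathrm{rev}}=w_{m-1}\cdots w_0$. Let $j^S_w$ be the number of transitions performed before entering FAIL (not counting the transition into FAIL). Cost: $f^S_{\mathrm{B(N)DM}}(w)=m$ if $w=S$, otherwise $j^S_w+1$. Let $\mathcal{I}^S(w)\subseteq\{0,\dots,m-1\}$ be the set of $i$ such that the automaton is in an accepting state after reading $i$ characters of $w^{\mathrm{rev}}$ (equivalently, $w_{m-i}\cdots w_{m-1}$ is a prefix of $S$). Shift: $g^S_{\mathrm{B(N)DM}}(w)=\min\{m-i: i\in\mathcal{I}^S(w)\}$.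 *)

theory Defs
  imports Main "HOL-Library.Sublist"
begin

text \<open>Strings are lists; \<open>w ! i\<close> is \<open>w_i\<close>. \<open>Sub(S)\<close> = contiguous sublists (incl. []).\<close>

definition rep_Sub :: "'a list \<Rightarrow> 'a list \<Rightarrow> 'a list" where
  "rep_Sub S a = drop (LEAST k. sublist (drop k a) S) a"

text \<open>After reading i characters of the reversed window, the string read is
  \<open>take i (rev w)\<close>. The automaton for \<open>rev S\<close> is not in FAIL after i steps iff
  every string read so far is a substring of \<open>rev S\<close>; it is accepting iff
  moreover the string read is a suffix of \<open>rev S\<close>.\<close>

definition not_fail :: "'a list \<Rightarrow> 'a list \<Rightarrow> nat \<Rightarrow> bool" where
  "not_fail S w i = (\<forall>k\<le>i. sublist (take k (rev w)) (rev S))"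

definition accepting :: "'a list \<Rightarrow> 'a list \<Rightarrow> nat \<Rightarrow> bool" where
  "accepting S w i = (not_fail S w i \<and> suffix (take i (rev w)) (rev S))"

definition j_steps :: "'a list \<Rightarrow> 'a list \<Rightarrow> nat" where
  "j_steps S w = (GREATEST i. i \<le> length w \<and> not_fail S w i)"

definition f_BDM :: "'a list \<Rightarrow> 'a list \<Rightarrow> nat" where
  "f_BDM S w = (if w = S then length S else j_steps S w + 1)"

definition I_set :: "'a list \<Rightarrow> 'a list \<Rightarrow> nat set" where
  "I_set S w = {i. i < length S \<and> accepting S w i}"

definition g_BDM :: "'a list \<Rightarrow> 'a list \<Rightarrow> nat" where
  "g_BDM S w = Min ((\<lambda>i. length S - i) ` I_set S w)"

end

theory Submission
  imports Defs
begin

lemma rep_drop: "\<exists>k0. rep_Sub S w = drop k0 w \<and> sublist (drop k0 w) S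
   \<and> (\<forall>k. sublist (drop k w) S \<longrightarrow> k0 \<le> k) \<and> k0 \<le> length w"
proof -
  have ex: "sublist (drop (length w) w) S" by simp
  define k0 where "k0 = (LEAST k. sublist (drop k w) S)"
  have "sublist (drop k0 w) S" unfolding k0_def by (rule LeastI[where P="\<lambda>k. sublist (drop k w) S", OF ex])
  moreover have "\<forall>k. sublist (drop k w) S \<longrightarrow> k0 \<le> k" unfolding k0_def
    by (auto intro: Least_le)
  ultimately show ?thesis unfolding rep_Sub_def k0_def using ex by blast
qed

lemma suffix_drop_sub:
  assumes "sublist (drop k0 w) S" "k0 \<le> n"
  shows "sublist (drop n w) S"
proof -
  have "drop n w = drop (n - k0) (drop k0 w)" using assms(2) by simp
  moreover have "suffix (drop (n - k0) (drop k0 w)) (drop k0 w)" by (rule suffix_drop)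
  ultimately show ?thesis using assms(1)
    by (metis sublist_order.dual_order.trans suffix_imp_sublist)
qed

lemma sub_iff:
  assumes "i \<le> length w"
  shows "sublist (drop (length w - i) w) S \<longleftrightarrow> i \<le> length (rep_Sub S w)"
proof -
  obtain k0 where k: "rep_Sub S w = drop k0 w" "sublist (drop k0 w) S"
    "\<forall>k. sublist (drop k w) S \<longrightarrow> k0 \<le> k" "k0 \<le> length w" using rep_drop by blast
  show ?thesis
  proof
    assume "sublist (drop (length w - i) w) S"
    then have "k0 \<le> length w - i" using k(3) by blast
    then show "i \<le> length (rep_Sub S w)" using k(1,4) assms by simp
  next
    assume "i \<le> length (rep_Sub S w)"
    then have "k0 \<le> length w - i" using k(1,4) assms by simp
    then show "sublist (drop (length w - i) w) S" using suffix_drop_sub k(2) by blast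
  qed
qed

lemma nf_iff:
  assumes "i \<le> length w"
  shows "not_fail S w i \<longleftrightarrow> i \<le> length (rep_Sub S w)"
proof -
  have "not_fail S w i \<longleftrightarrow> (\<forall>k\<le>i. k \<le> length (rep_Sub S w))"
    unfolding not_fail_def using assms
    by (auto simp: take_rev sublist_rev sub_iff)
  then show ?thesis by auto
qed

lemma drop_rep:
  assumes "i \<le> length (rep_Sub S w)"
  shows "drop (length w - i) w = drop (length (rep_Sub S w) - i) (rep_Sub S w)"
proof -
  obtain k0 where k: "rep_Sub S w = drop k0 w" "k0 \<le> length w" using rep_drop by blast
  have "length w - (k0 + i) + k0 = length w - i" using assms k by simp
  then show ?thesis unfolding k(1) by (simp add: add.commute)
qed

lemma acc_iff:
  assumes "i \<le> length w"
  shows "accepting S w i \<longleftrightarrow> i \<le> length (rep_Sub S w) \<and>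
     prefix (drop (length (rep_Sub S w) - i) (rep_Sub S w)) S"
  unfolding accepting_def using assms nf_iff[OF assms] drop_rep[of i S w]
  by (auto simp: take_rev suffix_to_prefix)

theorem lemma19:
  fixes \<Sigma> :: "'a set" and S a a' :: "'a list" and m :: nat
  assumes "finite \<Sigma>"
    and "length S = m" and "set S \<subseteq> \<Sigma>"
    and "length a = m" and "set a \<subseteq> \<Sigma>"
    and "length a' = m" and "set a' \<subseteq> \<Sigma>"
    and "rep_Sub S a = rep_Sub S a'"
  shows "f_BDM S a = f_BDM S a' \<and> g_BDM S a = g_BDM S a'"
proof -
  have P: "(\<lambda>i. i \<le> length a \<and> not_fail S a i) = (\<lambda>i. i \<le> length a' \<and> not_fail S a' i)"
    using assms nf_iff[of _ a S] nf_iff[of _ a' S] by (auto intro!: ext)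
  have J: "j_steps S a = j_steps S a'" unfolding j_steps_def P ..
  have repS: "rep_Sub S w = w" if "w = S" for w
  proof -
    obtain k0 where "rep_Sub S w = drop k0 w" "\<forall>k. sublist (drop k w) S \<longrightarrow> k0 \<le> k"
      using rep_drop by blast
    then show ?thesis using that by (metis drop0 le_zero_eq sublist_order.order_refl)
  qed
  have rl: "length (rep_Sub S w) = length w \<Longrightarrow> rep_Sub S w = w" for w
    proof -
    assume h: "length (rep_Sub S w) = length w"
    obtain k0 where "rep_Sub S w = drop k0 w" "k0 \<le> length w" using rep_drop by blast
    moreover have "k0 = 0 \<or> w = []" using h calculation by auto
    ultimately show ?thesis by auto
  qed
  have E: "a = S \<longleftrightarrow> a' = S"
    using repS rl assms(2,4,6,8) by metis
  have F: "f_BDM S a = f_BDM S a'" unfolding f_BDM_def using E J by simp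
  have "I_set S a = I_set S a'" unfolding I_set_def
    using assms acc_iff[of _ a S] acc_iff[of _ a' S] by auto
  then show ?thesis using F unfolding g_BDM_def by simp
qed

end
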